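(* Let $S>0$, let $I\ge 1$, let $N_1,\dots,N_I$ be positive integers and let $\theta_1>\theta_2>\dots>\theta_I>0$. Consider the complete price differentiation problem $$\max_{\{p_i>0,\ s_i\ge 0,\ n_i\}_{i=1}^I}\ \sum_{i=1}^I n_i p_i s_i\quad\text{s.t.}\quad s_i=\Big(\frac{\theta_i}{p_i}-1\Big)^+,\ \ n_i\in\{0,1,\dots,N_i\}\ (i=1,\dots,I),\quad \sum_{i=1}^I n_i s_i\le S,$$ where $(x)^+=\max(x,0)$. For $k\in\{1,\dots,I\}$ let $\lambda(k)=\Big(\frac{\sum_{i=1}^k N_i\sqrt{\theta_i}}{S+\sum_{i=1}^k N_i}\Big)^2$, let $K^{cp}=\max\{k\in\{1,\dots,I\}:\theta_k>\lambda(k)\}$ (this set contains $k=1$), and let $\lambda^*=\lambda(K^{cp})$. Then this problem has an optimal solution in which $n_i=N_i$ for all $i$, $$s_i=\sqrt{\theta_i/\lambda^*}-1,\ \ p_i=\sqrt{\theta_i\lambda^*}\quad\text{for } i=1,\dots,K^{cp},$$ and $s_i=0$, $p_i=\theta_i$ for $i=K^{cp}+1,\dots,I$.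
   Context: Each user of group $i$ has utility $\theta_i\ln(1+s)$ for $s$ units of resource; a user facing unit price $p_i$ demands the surplus-maximizing quantity $(\theta_i/p_i-1)^+$. The service provider with total resource $S$ chooses a price $p_i$ and a number $n_i$ of admitted users for each group $i$ to maximize revenue. *)

theory Defs
  imports Complex_Main
begin

definition pos_part :: "real \<Rightarrow> real" where
  "pos_part x = max x 0"

definition cp_feasible ::
  "nat \<Rightarrow> real \<Rightarrow> (nat \<Rightarrow> nat) \<Rightarrow> (nat \<Rightarrow> real) \<Rightarrow>
   (nat \<Rightarrow> real) \<Rightarrow> (nat \<Rightarrow> real) \<Rightarrow> (nat \<Rightarrow> nat) \<Rightarrow> bool" where
  "cp_feasible I S N \<theta> p s n \<longleftrightarrow>
     (\<forall>i\<in>{1..I}. p i > 0 \<and> s i \<ge> 0 \<and> s i = pos_part (\<theta> i / p i - 1) \<and> n i \<le> N i)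
     \<and> (\<Sum>i=1..I. real (n i) * s i) \<le> S"

definition cp_revenue ::
  "nat \<Rightarrow> (nat \<Rightarrow> real) \<Rightarrow> (nat \<Rightarrow> real) \<Rightarrow> (nat \<Rightarrow> nat) \<Rightarrow> real" where
  "cp_revenue I p s n = (\<Sum>i=1..I. real (n i) * p i * s i)"

definition cp_optimal ::
  "nat \<Rightarrow> real \<Rightarrow> (nat \<Rightarrow> nat) \<Rightarrow> (nat \<Rightarrow> real) \<Rightarrow>
   (nat \<Rightarrow> real) \<Rightarrow> (nat \<Rightarrow> real) \<Rightarrow> (nat \<Rightarrow> nat) \<Rightarrow> bool" where
  "cp_optimal I S N \<theta> p s n \<longleftrightarrow>
     cp_feasible I S N \<theta> p s n \<and>
     (\<forall>p' s' n'. cp_feasible I S N \<theta> p' s' n' \<longrightarrow> cp_revenue I p' s' n' \<le> cp_revenue I p s n)"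

definition cp_lambda :: "real \<Rightarrow> (nat \<Rightarrow> nat) \<Rightarrow> (nat \<Rightarrow> real) \<Rightarrow> nat \<Rightarrow> real" where
  "cp_lambda S N \<theta> k =
     ((\<Sum>i=1..k. real (N i) * sqrt (\<theta> i)) / (S + (\<Sum>i=1..k. real (N i)))) ^ 2"

definition K_cp :: "nat \<Rightarrow> real \<Rightarrow> (nat \<Rightarrow> nat) \<Rightarrow> (nat \<Rightarrow> real) \<Rightarrow> nat" where
  "K_cp I S N \<theta> = Max {k \<in> {1..I}. \<theta> k > cp_lambda S N \<theta> k}"

end

theory Submission imports Defs begin

lemma term_bound1:
  fixes q t m s :: real
  assumes q: "q > 0" and t: "t > 0" and m: "m > 0" and s: "s = pos_part (t/q - 1)"
  shows "q * s \<le> m^2 * s + (sqrt t - m)^2"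
proof (cases "t/q - 1 \<le> 0")
  case True then show ?thesis using s by (simp add: pos_part_def)
next
  case False
  then have s': "s = t/q - 1" using s by (simp add: pos_part_def)
  have st: "sqrt t ^ 2 = t" using t by simp
  have "q * (q * s) \<le> q * (m^2 * s + (sqrt t - m)^2)"
  proof -
    have "q * (q * s) = q*t - q^2" using q by (simp add: s' field_simps power2_eq_square)
    moreover have "q * (m^2 * s + (sqrt t - m)^2) = m^2 * t - m^2*q + q*(sqrt t ^2 - 2*sqrt t*m + m^2)"
      using q by (simp add: s' field_simps power2_eq_square)
    moreover have "q*t - q^2 \<le> m^2 * t - m^2*q + q*(sqrt t ^2 - 2*sqrt t*m + m^2)"
    proof -
      have "0 \<le> (q - m * sqrt t)^2" by simp
      then show ?thesis unfolding st using t by (simp add: power2_eq_square algebra_simps st[unfolded power2_eq_square])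
    qed
    ultimately show ?thesis by simp
  qed
  then show ?thesis using q by simp
qed

lemma term_bound2:
  fixes q t m s :: real
  assumes q: "q > 0" and t: "t > 0" and m: "t \<le> m^2" and s: "s = pos_part (t/q - 1)"
  shows "q * s \<le> m^2 * s"
proof (cases "t/q - 1 \<le> 0")
  case True then show ?thesis using s by (simp add: pos_part_def)
next
  case False
  then have s': "s = t/q - 1" and qt: "q < t" using s q by (auto simp add: pos_part_def field_simps)
  have "q * s \<le> m^2 * s"
    using s' qt m q False by (intro mult_right_mono) (auto simp: pos_part_def)
  then show ?thesis .
qed

theorem theorem1:
  fixes I :: nat and S :: real and N :: "nat \<Rightarrow> nat" and \<theta> :: "nat \<Rightarrow> real"
  assumes "S > 0" and "I \<ge> 1"
    and "\<forall>i\<in>{1..I}. N i > 0"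
    and "\<forall>i\<in>{1..I}. \<forall>j\<in>{1..I}. i < j \<longrightarrow> \<theta> i > \<theta> j"
    and "\<forall>i\<in>{1..I}. \<theta> i > 0"
  shows "let K = K_cp I S N \<theta>; lam = cp_lambda S N \<theta> K in
    cp_optimal I S N \<theta>
      (\<lambda>i. if i \<le> K then sqrt (\<theta> i * lam) else \<theta> i)
      (\<lambda>i. if i \<le> K then sqrt (\<theta> i / lam) - 1 else 0)
      N"
proof -
  note Spos = assms(1) and I1 = assms(2) and Npos = assms(3) and mono = assms(4) and tpos = assms(5)
  define K where "K = K_cp I S N \<theta>"
  define A where "A = (\<Sum>i=1..K. real (N i) * sqrt (\<theta> i))"
  define B where "B = (\<Sum>i=1..K. real (N i))"
  define m where "m = A / (S + B)"
  define T where "T = {k \<in> {1..I}. \<theta> k > cp_lambda S N \<theta> k}"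
  have "1 \<in> T"
  proof -
    have N1: "N 1 > 0" and t1: "\<theta> 1 > 0" using Npos tpos I1 by auto
    have "cp_lambda S N \<theta> 1 = (real (N 1) * sqrt (\<theta> 1) / (S + real (N 1)))^2"
      by (simp add: cp_lambda_def)
    also have "\<dots> < sqrt (\<theta> 1) ^ 2"
    proof (rule power_strict_mono)
      have "real (N 1) * sqrt (\<theta> 1) < (S + real (N 1)) * sqrt (\<theta> 1)"
        using Spos t1 by (simp add: algebra_simps)
      then show "real (N 1) * sqrt (\<theta> 1) / (S + real (N 1)) < sqrt (\<theta> 1)"
        using Spos by (simp add: divide_less_eq mult.commute)
    qed (use Spos t1 in auto)
    also have "\<dots> = \<theta> 1" using t1 by simp
    finally show ?thesis unfolding T_def using I1 by auto
  qed
  have finT: "finite T" unfolding T_def by auto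
  have KT: "K \<in> T" unfolding K_def K_cp_def T_def[symmetric]
    using finT \<open>1 \<in> T\<close> by (intro Max_in) auto
  have K1: "1 \<le> K" and KI: "K \<le> I" and tK: "\<theta> K > cp_lambda S N \<theta> K"
    using KT unfolding T_def by auto
  have Kmax: "\<And>k. k \<in> T \<Longrightarrow> k \<le> K" unfolding K_def K_cp_def T_def[symmetric]
    using finT by auto
  have Bnn: "B \<ge> 0" unfolding B_def by (intro sum_nonneg) auto
  have Apos: "A > 0" unfolding A_def
  proof (rule sum_pos2[where i=1])
    show "real (N 1) * sqrt (\<theta> 1) > 0" using Npos tpos I1 by auto
  qed (use K1 KI Npos tpos in \<open>auto intro!: mult_nonneg_nonneg less_imp_le\<close>)
  have mpos: "m > 0" unfolding m_def using Apos Bnn Spos by auto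
  have lam: "cp_lambda S N \<theta> K = m^2" by (simp add: cp_lambda_def A_def B_def m_def)
  have sq1: "\<And>i. sqrt (\<theta> i * m^2) = sqrt (\<theta> i) * m"
    using mpos by (simp add: real_sqrt_mult)
  have sq2: "\<And>i. sqrt (\<theta> i / m^2) = sqrt (\<theta> i) / m"
    using mpos by (simp add: real_sqrt_divide)
  have hi: "\<And>i. i \<in> {1..K} \<Longrightarrow> sqrt (\<theta> i) > m"
  proof -
    fix i assume i: "i \<in> {1..K}"
    have "\<theta> i \<ge> \<theta> K" using mono[rule_format, of i K] i KI K1 by (cases "i = K") auto
    then have "\<theta> i > m^2" using tK lam by simp
    then have "sqrt (\<theta> i) > sqrt (m^2)" by (rule real_sqrt_less_mono)
    then show "sqrt (\<theta> i) > m" using mpos by simp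
  qed
  have lo: "\<And>i. i \<in> {1..I} \<Longrightarrow> K < i \<Longrightarrow> \<theta> i \<le> m^2"
  proof -
    fix i assume i: "i \<in> {1..I}" "K < i"
    have KI': "K + 1 \<le> I" using i by auto
    have "K + 1 \<notin> T" using Kmax by fastforce
    then have l1: "\<theta> (K+1) \<le> cp_lambda S N \<theta> (K+1)" unfolding T_def using KI' by auto
    define t where "t = \<theta> (K+1)"
    define n where "n = real (N (K+1))"
    have tp: "t > 0" using tpos KI' unfolding t_def by auto
    have l2: "cp_lambda S N \<theta> (K+1) = ((A + n * sqrt t)/(S + B + n))^2"
      by (simp add: cp_lambda_def A_def B_def n_def t_def add.assoc)
    have nn: "n \<ge> 0" unfolding n_def by simp
    have "sqrt t \<le> m"
    proof (rule ccontr)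
      assume "\<not> sqrt t \<le> m"
      then have "A < sqrt t * (S + B)" unfolding m_def using Spos Bnn by (simp add: divide_less_eq not_le mult.commute)
      then have "A + n * sqrt t < sqrt t * (S + B + n)" by (simp add: algebra_simps)
      then have c: "(A + n * sqrt t)/(S + B + n) < sqrt t" using Spos Bnn nn by (simp add: divide_less_eq)
      have "((A + n * sqrt t)/(S + B + n))^2 < sqrt t ^ 2"
        by (rule power_strict_mono[OF c]) (use Apos tp nn Spos Bnn in auto)
      then show False using l1 l2 tp unfolding t_def[symmetric] by simp
    qed
    then have "t \<le> m^2" using tp by (metis real_sqrt_le_iff real_sqrt_unique mpos less_imp_le)
    moreover have "\<theta> i \<le> t" unfolding t_def using mono[rule_format, of "K+1" i] i KI' by (cases "i = K+1") (auto intro: less_imp_le)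
    ultimately show "\<theta> i \<le> m^2" by simp
  qed
  define p where "p = (\<lambda>i. if i \<le> K then sqrt (\<theta> i) * m else \<theta> i)"
  define s where "s = (\<lambda>i. if i \<le> K then sqrt (\<theta> i) / m - 1 else 0)"
  have Am: "A = m * (S + B)" unfolding m_def using Spos Bnn by simp
  have sqsq: "\<And>i. i \<in> {1..I} \<Longrightarrow> sqrt (\<theta> i) * sqrt (\<theta> i) = \<theta> i"
    using tpos by (simp add: less_imp_le)
  have split: "\<And>f :: nat \<Rightarrow> real. (\<Sum>i=1..I. if i \<le> K then f i else 0) = (\<Sum>i=1..K. f i)"
  proof -
    fix f :: "nat \<Rightarrow> real"
    have "(\<Sum>i=1..I. if i \<le> K then f i else 0) = (\<Sum>i\<in>{1..I} \<inter> {i. i \<le> K}. f i)"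
      by (simp add: sum.If_cases)
    also have "{1..I} \<inter> {i. i \<le> K} = {1..K}" using KI by auto
    finally show "(\<Sum>i=1..I. if i \<le> K then f i else 0) = (\<Sum>i=1..K. f i)" .
  qed
  have feas: "cp_feasible I S N \<theta> p s N"
    unfolding cp_feasible_def
  proof (intro conjI ballI)
    fix i assume i: "i \<in> {1..I}"
    show "p i > 0" using hi[of i] tpos i mpos by (auto simp: p_def)
    show "s i \<ge> 0" using hi[of i] i mpos by (auto simp: s_def field_simps)
    show "N i \<le> N i" by simp
    show "s i = pos_part (\<theta> i / p i - 1)"
    proof (cases "i \<le> K")
      case True
      have "\<theta> i / p i = sqrt (\<theta> i) / m"
      proof -
        have "\<theta> i / p i = (sqrt (\<theta> i) * sqrt (\<theta> i)) / (sqrt (\<theta> i) * m)"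
          using True sqsq[OF i] by (simp add: p_def)
        also have "\<dots> = sqrt (\<theta> i) / m" using hi[of i] i mpos True by (intro mult_divide_mult_cancel_left) auto
        finally show ?thesis .
      qed
      moreover have "sqrt (\<theta> i) / m - 1 \<ge> 0" using True hi[of i] i mpos by (simp add: field_simps)
      ultimately show ?thesis using True by (simp add: s_def pos_part_def)
    next
      case False then show ?thesis using tpos i by (simp add: s_def p_def pos_part_def)
    qed
  next
    have "(\<Sum>i=1..I. real (N i) * s i) = (\<Sum>i=1..I. if i \<le> K then real (N i) * (sqrt (\<theta> i) / m - 1) else 0)"
      by (rule sum.cong) (auto simp: s_def)
    also have "\<dots> = (\<Sum>i=1..K. real (N i) * (sqrt (\<theta> i) / m - 1))" by (rule split)
    also have "\<dots> = (\<Sum>i=1..K. real (N i) * sqrt (\<theta> i)) / m - B"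
      by (simp add: B_def algebra_simps sum_subtractf sum_divide_distrib)
    also have "\<dots> = S" unfolding A_def[symmetric] Am using mpos by simp
    finally show "(\<Sum>i=1..I. real (N i) * s i) \<le> S" by simp
  qed
  define h where "h = (\<lambda>i. if i \<le> K then (sqrt (\<theta> i) - m)^2 else 0)"
  have rev: "cp_revenue I p s N = m^2 * S + (\<Sum>i=1..I. real (N i) * h i)"
  proof -
    have "cp_revenue I p s N = (\<Sum>i=1..I. if i \<le> K then real (N i) * (\<theta> i - m * sqrt (\<theta> i)) else 0)"
      unfolding cp_revenue_def
      by (rule sum.cong) (use mpos sqsq in \<open>auto simp: s_def p_def field_simps\<close>)
    also have "\<dots> = (\<Sum>i=1..K. real (N i) * (\<theta> i - m * sqrt (\<theta> i)))" by (rule split)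
    finally have r1: "cp_revenue I p s N = (\<Sum>i=1..K. real (N i) * (\<theta> i - m * sqrt (\<theta> i)))" .
    have "(\<Sum>i=1..I. real (N i) * h i) = (\<Sum>i=1..I. if i \<le> K then real (N i) * (sqrt (\<theta> i) - m)^2 else 0)"
      by (rule sum.cong) (auto simp: h_def)
    also have "\<dots> = (\<Sum>i=1..K. real (N i) * (sqrt (\<theta> i) - m)^2)" by (rule split)
    finally have r2: "(\<Sum>i=1..I. real (N i) * h i) = (\<Sum>i=1..K. real (N i) * (sqrt (\<theta> i) - m)^2)" .
    have "(\<Sum>i=1..K. real (N i) * (\<theta> i - m * sqrt (\<theta> i))) - (\<Sum>i=1..K. real (N i) * (sqrt (\<theta> i) - m)^2)
        = (\<Sum>i=1..K. m * (real (N i) * sqrt (\<theta> i)) - m^2 * real (N i))"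
      unfolding sum_subtractf[symmetric]
    proof (rule sum.cong)
      fix i assume i: "i \<in> {1..K}"
      then have "sqrt (\<theta> i) * sqrt (\<theta> i) = \<theta> i" using sqsq KI by auto
      then show "real (N i) * (\<theta> i - m * sqrt (\<theta> i)) - real (N i) * (sqrt (\<theta> i) - m)\<^sup>2 =
         m * (real (N i) * sqrt (\<theta> i)) - m\<^sup>2 * real (N i)"
        by (simp add: power2_eq_square algebra_simps)
    qed simp
    also have "\<dots> = m * A - m^2 * B"
      by (simp add: A_def B_def sum_subtractf sum_distrib_left)
    also have "\<dots> = m^2 * S" by (simp add: Am power2_eq_square algebra_simps)
    finally show ?thesis using r1 r2 by simp
  qed
  have opt: "\<And>p' s' n'. cp_feasible I S N \<theta> p' s' n' \<Longrightarrow> cp_revenue I p' s' n' \<le> cp_revenue I p s N"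
  proof -
    fix p' s' n' assume F: "cp_feasible I S N \<theta> p' s' n'"
    have tb: "\<And>i. i \<in> {1..I} \<Longrightarrow> real (n' i) * p' i * s' i \<le> m^2 * (real (n' i) * s' i) + real (N i) * h i"
    proof -
      fix i assume i: "i \<in> {1..I}"
      have q: "p' i > 0" and ss: "s' i = pos_part (\<theta> i / p' i - 1)" and nn: "n' i \<le> N i"
        using F i unfolding cp_feasible_def by auto
      have hnn: "h i \<ge> 0" by (simp add: h_def)
      have "p' i * s' i \<le> m^2 * s' i + h i"
      proof (cases "i \<le> K")
        case True then show ?thesis using term_bound1[OF q _ mpos ss] tpos i by (simp add: h_def)
      next
        case False then show ?thesis using term_bound2[OF q _ lo[OF i] ss] tpos i by (simp add: h_def)
      qed
      then have "real (n' i) * (p' i * s' i) \<le> real (n' i) * (m^2 * s' i + h i)"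
        by (rule mult_left_mono) simp
      moreover have "real (n' i) * h i \<le> real (N i) * h i"
        using nn hnn by (intro mult_right_mono) auto
      ultimately show "real (n' i) * p' i * s' i \<le> m^2 * (real (n' i) * s' i) + real (N i) * h i"
        by (simp add: algebra_simps)
    qed
    have "cp_revenue I p' s' n' \<le> (\<Sum>i=1..I. m^2 * (real (n' i) * s' i) + real (N i) * h i)"
      unfolding cp_revenue_def by (rule sum_mono) (rule tb)
    also have "\<dots> = m^2 * (\<Sum>i=1..I. real (n' i) * s' i) + (\<Sum>i=1..I. real (N i) * h i)"
      by (simp add: sum.distrib sum_distrib_left)
    also have "\<dots> \<le> m^2 * S + (\<Sum>i=1..I. real (N i) * h i)"
      using F unfolding cp_feasible_def by (intro add_right_mono mult_left_mono) auto
    finally show "cp_revenue I p' s' n' \<le> cp_revenue I p s N" using rev by simp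
  qed
  have "cp_optimal I S N \<theta> p s N" using feas opt unfolding cp_optimal_def by blast
  moreover have "(\<lambda>i. if i \<le> K then sqrt (\<theta> i * cp_lambda S N \<theta> K) else \<theta> i) = p"
    unfolding lam p_def using sq1 by presburger
  moreover have "(\<lambda>i. if i \<le> K then sqrt (\<theta> i / cp_lambda S N \<theta> K) - 1 else 0) = s"
    unfolding lam s_def using sq2 by presburger
  ultimately show ?thesis unfolding Let_def K_def[symmetric] by simp
qed

end
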